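(* For all $n\ge2$ and $a>0$, $$\frac{d\mathsf p(n,a)}{da}=\frac{2e^{-a^2}P_n(a)P_{n-2}(a)}{h_{n-2}(a)}=a\,r_n(a)-\frac{n+r_n(a)}{2}R_n(a).$$
   Context: Fix $a>0$. Let $w(x)=e^{-x^2}\chi_{\mathbb{R}\setminus(-a,a)}(x)$. Let $P_n$ be the monic orthogonal polynomials for $w$, with $h_n=\int P_n^2w$, and write $P_n(x)=x^n+\mathsf p(n,a)x^{n-2}+\dots$. Define $$R_n(a)=\frac{2e^{-a^2}P_n(a)^2}{h_n(a)},\qquad r_n(a)=\frac{2e^{-a^2}P_n(a)P_{n-1}(a)}{h_{n-1}(a)}.$$ *)

theory Defs
  imports "HOL-Analysis.Analysis" "HOL-Computational_Algebra.Polynomial"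
begin

definition wt :: "real \<Rightarrow> real \<Rightarrow> real" where
  "wt a x = exp (- (x^2)) * indicator (UNIV - {-a<..<a}) x"

definition OP :: "real \<Rightarrow> nat \<Rightarrow> real poly" where
  "OP a n = (THE p. degree p = n \<and> lead_coeff p = 1 \<and>
      (\<forall>k<n. (LINT x|lborel. poly p x * x ^ k * wt a x) = 0))"

definition hn :: "real \<Rightarrow> nat \<Rightarrow> real" where
  "hn a n = (LINT x|lborel. (poly (OP a n) x)^2 * wt a x)"

definition pco :: "nat \<Rightarrow> real \<Rightarrow> real" where
  "pco n a = coeff (OP a n) (n - 2)"

definition Rn :: "nat \<Rightarrow> real \<Rightarrow> real" where
  "Rn n a = 2 * exp (- (a^2)) * (poly (OP a n) a)^2 / hn a n"

definition rn :: "nat \<Rightarrow> real \<Rightarrow> real" where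
  "rn n a = 2 * exp (- (a^2)) * poly (OP a n) a * poly (OP a (n - 1)) a / hn a (n - 1)"

end

theory Submission
  imports Defs "HOL-Probability.Distributions"
begin

lemma int_gm: "integrable lborel (\<lambda>x::real. exp (- x\<^sup>2) * x ^ k)"
proof (cases "even k")
  case True
  then obtain j where k: "k = 2*j" by (auto elim: evenE)
  have "has_bochner_integral lborel (\<lambda>x::real. exp (- x\<^sup>2) * x ^ (2*j)) (2 *\<^sub>R ((sqrt pi / 2) * (fact (2 * j) / (2 ^ (2 * j) * fact j))))"
    by (rule has_bochner_integral_even_function[OF gaussian_moment_even_pos]) (simp add: power_mult)
  then show ?thesis using k by (auto dest: integrable.intros)
next
  case False
  then obtain j where k: "k = 2*j+1" by (auto elim: oddE)
  have "has_bochner_integral lborel (\<lambda>x::real. exp (- x\<^sup>2) * x ^ (2*j+1)) 0"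
    by (rule has_bochner_integral_odd_function[OF gaussian_moment_odd_pos]) (simp add: power_mult)
  then show ?thesis using k by (auto dest: integrable.intros)
qed

lemma wt_meas[measurable]: "(\<lambda>x. wt b x) \<in> borel_measurable borel"
  unfolding wt_def by measurable

lemma wt_nonneg: "wt b x \<ge> 0"
  unfolding wt_def by (simp split: split_indicator)

lemma wt_even: "wt b (-x) = wt b x"
  unfolding wt_def by (auto split: split_indicator)

lemma int_mono_wt: "integrable lborel (\<lambda>x::real. x ^ k * wt b x)"
proof -
  have "integrable lborel (\<lambda>x::real. (exp (- x\<^sup>2) * x ^ k) * indicator (UNIV - {-b<..<b}) x)"
    by (rule integrable_real_mult_indicator) (auto intro: int_gm)
  then show ?thesis unfolding wt_def by (simp add: ac_simps)
qed

lemma int_poly_wt: "integrable lborel (\<lambda>x::real. poly p x * wt b x)"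
proof -
  have "integrable lborel (\<lambda>x::real. \<Sum>i\<le>degree p. coeff p i * (x ^ i * wt b x))"
    by (rule Bochner_Integration.integrable_sum, rule Bochner_Integration.integrable_mult_right, rule int_mono_wt)
  then show ?thesis by (simp add: poly_altdef sum_distrib_left sum_distrib_right ac_simps)
qed

definition ip :: "real \<Rightarrow> real poly \<Rightarrow> real poly \<Rightarrow> real" where
 "ip b p q = (LINT x|lborel. poly p x * poly q x * wt b x)"

definition mom :: "real \<Rightarrow> nat \<Rightarrow> real" where
 "mom b k = (LINT x|lborel. x ^ k * wt b x)"

lemma int_pq: "integrable lborel (\<lambda>x::real. poly p x * poly q x * wt b x)"
  using int_poly_wt[of "p*q" b] by simp

lemma ip_sym: "ip b p q = ip b q p"
  unfolding ip_def by (simp add: ac_simps)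

lemma ip_add2: "ip b p (q + r) = ip b p q + ip b p r"
proof -
  have "ip b p (q + r) = (LINT x|lborel. poly p x * poly q x * wt b x + poly p x * poly r x * wt b x)"
    unfolding ip_def by (simp add: algebra_simps)
  also have "\<dots> = ip b p q + ip b p r"
    unfolding ip_def by (rule Bochner_Integration.integral_add[OF int_pq int_pq])
  finally show ?thesis .
qed

lemma ip_smult2: "ip b p (smult c q) = c * ip b p q"
proof -
  have "ip b p (smult c q) = (LINT x|lborel. c * (poly p x * poly q x * wt b x))"
    unfolding ip_def by (simp add: algebra_simps)
  also have "\<dots> = c * ip b p q"
    unfolding ip_def by (rule integral_mult_right_zero)
  finally show ?thesis .
qed

lemma ip_minus2: "ip b p (- q) = - ip b p q"
  using ip_smult2[of b p "-1" q] by simp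

lemma ip_diff2: "ip b p (q - r) = ip b p q - ip b p r"
  using ip_add2[of b p q "-r"] ip_minus2[of b p r] by simp

lemma ip_sum2: "ip b p (\<Sum>j\<in>A. f j) = (\<Sum>j\<in>A. ip b p (f j))"
proof (induction A rule: infinite_finite_induct)
  case (infinite A) then show ?case by (simp add: ip_def)
next
  case empty then show ?case by (simp add: ip_def)
next
  case (insert x F) then show ?case by (simp add: ip_add2)
qed

lemma ip_add1: "ip b (q + r) p = ip b q p + ip b r p"
  by (metis ip_add2 ip_sym)
lemma ip_smult1: "ip b (smult c q) p = c * ip b q p"
  by (metis ip_smult2 ip_sym)
lemma ip_diff1: "ip b (q - r) p = ip b q p - ip b r p"
  by (metis ip_diff2 ip_sym)
lemma ip_sum1: "ip b (\<Sum>j\<in>A. f j) p = (\<Sum>j\<in>A. ip b (f j) p)"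
  by (simp add: ip_sym[of b _ p] ip_sum2)
lemma ip_zero[simp]: "ip b 0 p = 0" "ip b p 0 = 0"
  by (simp_all add: ip_def)

lemma ip_nonneg: "ip b p p \<ge> 0"
  unfolding ip_def by (intro integral_nonneg_AE AE_I2 mult_nonneg_nonneg zero_le_square wt_nonneg)

lemma ip_pos: assumes "p \<noteq> 0" shows "ip b p p > 0"
proof (rule ccontr)
  assume "\<not> ip b p p > 0"
  then have "ip b p p = 0" using ip_nonneg[of b p] by linarith
  then have AE1: "AE x in lborel. poly p x * poly p x * wt b x = 0"
    unfolding ip_def by (subst (asm) integral_nonneg_eq_0_iff_AE) (auto intro!: int_pq AE_I2 mult_nonneg_nonneg zero_le_square wt_nonneg)
  have "countable {x. poly p x = 0}" using poly_roots_finite[OF assms] by (simp add: countable_finite)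
  then have "{x. poly p x = 0} \<in> null_sets lborel" by (rule countable_imp_null_set_lborel)
  then have AE2: "AE x in lborel. poly p x \<noteq> 0"
    by (rule AE_not_in[THEN eventually_mono]) simp
  define c where "c = \<bar>b\<bar> + 1"
  have "AE x in lborel. x \<notin> {c..c+1}"
    using AE1 AE2
  proof eventually_elim
    case (elim x)
    show ?case
    proof
      assume "x \<in> {c..c+1}"
      then have "x \<notin> {-b<..<b}" unfolding c_def by auto
      then have "wt b x > 0" unfolding wt_def by simp
      with elim show False by simp
    qed
  qed
  then have "emeasure lborel {c..c+1} = 0"
    by (subst (asm) AE_iff_measurable[of "{c..c+1}"]) auto
  then show False by simp
qed

lemma ip_self_eq0: "ip b p p = 0 \<longleftrightarrow> p = 0"
  by (metis ip_pos ip_zero(1) less_irrefl)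

lemma ip_monom: assumes "degree p \<le> N"
  shows "ip b p (monom 1 k) = (\<Sum>i\<le>N. coeff p i * mom b (i+k))"
proof -
  have "ip b p (monom 1 k) = (LINT x|lborel. (\<Sum>i\<le>N. coeff p i * (x ^ (i+k) * wt b x)))"
    unfolding ip_def
    apply (subst (1) poly_as_sum_of_monoms'[OF assms, symmetric])
    by (simp add: poly_sum poly_monom sum_distrib_left sum_distrib_right power_add ac_simps)
  also have "\<dots> = (\<Sum>i\<le>N. coeff p i * mom b (i+k))"
    unfolding mom_def
    by (subst Bochner_Integration.integral_sum) (auto intro!: Bochner_Integration.integrable_mult_right int_mono_wt)
  finally show ?thesis .
qed

lemma ip_expand2: assumes "degree q \<le> N"
  shows "ip b p q = (\<Sum>k\<le>N. coeff q k * ip b p (monom 1 k))"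
proof -
  have eq: "q = (\<Sum>k\<le>N. smult (coeff q k) (monom 1 k))"
    using poly_as_sum_of_monoms'[OF assms] by (simp add: smult_monom)
  have "ip b p q = ip b p (\<Sum>k\<le>N. smult (coeff q k) (monom 1 k))"
    by (rule arg_cong[where f="ip b p", OF eq])
  also have "\<dots> = (\<Sum>k\<le>N. coeff q k * ip b p (monom 1 k))"
    by (simp add: ip_sum2 ip_smult2)
  finally show ?thesis .
qed
fun GS :: "real \<Rightarrow> nat \<Rightarrow> real poly" where
"GS b n = monom 1 n - (\<Sum>j<n. smult (ip b (monom 1 n) (GS b j) / ip b (GS b j) (GS b j)) (GS b j))"

declare GS.simps[simp del]

lemma GS_deg: "degree (GS b n) = n \<and> coeff (GS b n) n = 1"
proof (induction n rule: less_induct)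
  case (less n)
  define S where "S = (\<Sum>j<n. smult (ip b (monom 1 n) (GS b j) / ip b (GS b j) (GS b j)) (GS b j))"
  have G: "GS b n = monom 1 n - S" unfolding S_def by (subst GS.simps) simp
  have cS: "coeff S i = 0" if "i \<ge> n" for i
  proof -
    have "coeff (GS b j) i = 0" if "j < n" for j
      using less[OF that] that \<open>i \<ge> n\<close> by (intro coeff_eq_0) auto
    then show ?thesis unfolding S_def by (simp add: coeff_sum)
  qed
  have c1: "coeff (GS b n) n = 1" using cS[of n] by (simp add: G)
  have c2: "coeff (GS b n) i = 0" if "i > n" for i using cS[of i] that by (simp add: G coeff_monom)
  have "degree (GS b n) \<le> n" by (rule degree_le) (auto intro: c2)
  moreover have "n \<le> degree (GS b n)" by (rule le_degree) (simp add: c1)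
  ultimately show ?case using c1 by simp
qed

lemma GS_degree[simp]: "degree (GS b n) = n" using GS_deg by blast
lemma GS_lead[simp]: "coeff (GS b n) n = 1" using GS_deg by blast
lemma GS_ne0: "GS b n \<noteq> 0" using GS_lead[of b n] by (metis coeff_0 zero_neq_one)
lemma GS_h_pos: "ip b (GS b n) (GS b n) > 0" using ip_pos[OF GS_ne0] .

lemma GS_ortho: "j < n \<Longrightarrow> ip b (GS b n) (GS b j) = 0"
proof (induction n arbitrary: j rule: less_induct)
  case (less n)
  define c where "c i = ip b (monom 1 n) (GS b i) / ip b (GS b i) (GS b i)" for i
  have G: "GS b n = monom 1 n - (\<Sum>i<n. smult (c i) (GS b i))" unfolding c_def by (subst GS.simps) simp
  have "\<forall>i\<in>{..<n}. c i * ip b (GS b i) (GS b j) = (if i = j then c j * ip b (GS b j) (GS b j) else 0)"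
  proof
    fix i assume i: "i \<in> {..<n}"
    show "c i * ip b (GS b i) (GS b j) = (if i = j then c j * ip b (GS b j) (GS b j) else 0)"
    proof (cases "i = j")
      case False
      then have "ip b (GS b i) (GS b j) = 0"
      proof (cases "j < i")
        case True then show ?thesis using less.IH[of i j] i by simp
      next
        case False then have "i < j" using \<open>i \<noteq> j\<close> by simp
        then show ?thesis using less.IH[of j i] less.prems by (simp add: ip_sym)
      qed
      then show ?thesis using False by simp
    qed simp
  qed
  then have "(\<Sum>i<n. c i * ip b (GS b i) (GS b j)) = (\<Sum>i<n. (if i = j then c j * ip b (GS b j) (GS b j) else 0))"
    by (intro sum.cong refl) blast
  also have "\<dots> = c j * ip b (GS b j) (GS b j)" using less.prems by simp
  also have "\<dots> = ip b (monom 1 n) (GS b j)" unfolding c_def using GS_h_pos[of b j] by simp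
  finally show ?case by (simp add: G ip_diff1 ip_sum1 ip_smult1)
qed

lemma GS_ortho_low: "degree p < n \<Longrightarrow> ip b (GS b n) p = 0"
proof -
  have "\<forall>p. degree p < m \<longrightarrow> m \<le> n \<longrightarrow> ip b (GS b n) p = 0" for m
  proof (induction m)
    case 0 then show ?case by simp
  next
    case (Suc m)
    show ?case
    proof (intro allI impI)
      fix p :: "real poly" assume dp: "degree p < Suc m" and mn: "Suc m \<le> n"
      define q where "q = p - smult (coeff p m) (GS b m)"
      have dq: "degree q \<le> m" unfolding q_def using dp
        by (intro degree_diff_le) (auto intro: order.trans[OF degree_smult_le])
      have cq: "coeff q m = 0" unfolding q_def by simp
      have "ip b (GS b n) q = 0"
      proof (cases "q = 0")
        case False
        then have "degree q \<noteq> m" using cq by (metis leading_coeff_0_iff)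
        then show ?thesis using Suc.IH dq mn by auto
      qed simp
      moreover have "p = q + smult (coeff p m) (GS b m)" unfolding q_def by simp
      ultimately show "ip b (GS b n) p = 0"
        using GS_ortho[of m n b] mn by (metis add.left_neutral ip_add2 ip_smult2 mult_zero_right Suc_le_lessD)
    qed
  qed
  then show "degree p < n \<Longrightarrow> ip b (GS b n) p = 0" by blast
qed

lemma GS_L: "degree R \<le> m \<Longrightarrow> ip b R (GS b m) = coeff R m * ip b (GS b m) (GS b m)"
proof -
  assume dR: "degree R \<le> m"
  define q where "q = R - smult (coeff R m) (GS b m)"
  have dq: "degree q \<le> m" unfolding q_def using dR
    by (intro degree_diff_le) (auto intro: order.trans[OF degree_smult_le])
  have cq: "coeff q m = 0" unfolding q_def by simp
  have "ip b q (GS b m) = 0"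
  proof (cases "q = 0")
    case False
    then have "degree q \<noteq> m" using cq by (metis leading_coeff_0_iff)
    then show ?thesis using GS_ortho_low[of q m b] dq by (simp add: ip_sym)
  qed simp
  moreover have "R = q + smult (coeff R m) (GS b m)" unfolding q_def by simp
  ultimately show ?thesis by (metis add.left_neutral ip_add1 ip_smult1)
qed

definition isOP :: "real \<Rightarrow> nat \<Rightarrow> real poly \<Rightarrow> bool" where
 "isOP a n p \<longleftrightarrow> degree p = n \<and> lead_coeff p = 1 \<and>
      (\<forall>k<n. (LINT x|lborel. poly p x * x ^ k * wt a x) = 0)"

lemma isOP_ip: "(LINT x|lborel. poly p x * x ^ k * wt a x) = ip a p (monom 1 k)"
  unfolding ip_def by (simp add: poly_monom)

lemma isOP_GS: "isOP b n (GS b n)"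
  unfolding isOP_def isOP_ip by (auto intro!: GS_ortho_low simp: degree_monom_eq)

lemma isOP_unique: assumes "isOP b n p" "isOP b n q" shows "p = q"
proof -
  have orth: "ip b r s = 0" if "isOP b n r" "degree s < n" for r s
  proof -
    have "ip b r s = (\<Sum>k\<le>degree s. coeff s k * ip b r (monom 1 k))" by (rule ip_expand2) simp
    also have "\<dots> = 0" using that unfolding isOP_def isOP_ip by (intro sum.neutral) auto
    finally show ?thesis .
  qed
  define d where "d = p - q"
  have dd: "degree d \<le> n" unfolding d_def using assms unfolding isOP_def by (auto intro: degree_diff_le)
  have cd: "coeff d n = 0" unfolding d_def using assms unfolding isOP_def by (metis coeff_diff diff_self)
  have "d = 0"
  proof (rule ccontr)
    assume "d \<noteq> 0"
    then have "degree d < n" using dd cd by (metis leading_coeff_0_iff le_neq_implies_less)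
    then have "ip b p d = 0" "ip b q d = 0" using orth assms by auto
    then have "ip b d d = 0" by (simp add: d_def ip_diff1)
    then show False using \<open>d \<noteq> 0\<close> ip_self_eq0 by blast
  qed
  then show ?thesis unfolding d_def by simp
qed

lemma OP_GS: "OP b n = GS b n"
  unfolding OP_def using isOP_GS isOP_unique unfolding isOP_def[symmetric]
  by (intro the_equality) (auto simp: isOP_def)
lemma lint_reflect: "(LINT x|lborel. f (- x)) = (LINT x|lborel. (f (x::real) :: real))"
  using lborel_integral_real_affine[of "-1" f 0] by simp

lemma lint_odd: assumes "\<And>x. f (- x) = - f x" shows "(LINT x|lborel. (f (x::real) :: real)) = 0"
proof -
  have "(LINT x|lborel. f x) = (LINT x|lborel. f (- x))" by (rule lint_reflect[symmetric])
  also have "\<dots> = - (LINT x|lborel. f x)" by (simp add: assms)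
  finally show ?thesis by simp
qed

lemma GS_parity: "poly (GS b n) (- x) = (-1) ^ n * poly (GS b n) x"
proof -
  define q where "q = smult ((-1) ^ n) (GS b n \<circ>\<^sub>p [:0, -1:])"
  have pq: "poly q x = (-1) ^ n * poly (GS b n) (- x)" for x
    unfolding q_def by (simp add: poly_pcompose)
  have "isOP b n q"
    unfolding isOP_def
  proof (intro conjI allI impI)
    show dq: "degree q = n" unfolding q_def by (simp add: degree_pcompose)
    have "lead_coeff (GS b n \<circ>\<^sub>p [:0, -1:]) = lead_coeff (GS b n) * lead_coeff [:0, -1::real:] ^ degree (GS b n)"
      by (rule lead_coeff_comp) simp
    then show "lead_coeff q = 1" using dq unfolding q_def
      by (simp add: degree_pcompose flip: power_mult_distrib)
    fix k assume k: "k < n"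
    have "(LINT x|lborel. poly q x * x ^ k * wt b x) = (LINT x|lborel. (-1) ^ n * (poly (GS b n) (- x) * x ^ k * wt b (- x)))"
      by (simp add: pq wt_even mult.assoc)
    also have "\<dots> = (-1) ^ n * (LINT x|lborel. poly (GS b n) (- x) * (- (- x)) ^ k * wt b (- x))"
      by simp
    also have "(LINT x|lborel. poly (GS b n) (- x) * (- (- x)) ^ k * wt b (- x)) = (LINT x|lborel. poly (GS b n) x * (- x) ^ k * wt b x)"
      by (rule lint_reflect[where f = "\<lambda>x. poly (GS b n) x * (- x) ^ k * wt b x"])
    also have "\<dots> = (-1) ^ k * (LINT x|lborel. poly (GS b n) x * x ^ k * wt b x)"
    proof -
      have "\<And>x. poly (GS b n) x * (- x) ^ k * wt b x = (-1) ^ k * (poly (GS b n) x * x ^ k * wt b x)"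
        by (subst power_minus) simp
      then show ?thesis by (simp only: integral_mult_right_zero)
    qed
    also have "(LINT x|lborel. poly (GS b n) x * x ^ k * wt b x) = 0"
      using isOP_GS[of b n] k unfolding isOP_def by blast
    finally show "(LINT x|lborel. poly q x * x ^ k * wt b x) = 0" by simp
  qed
  then have "q = GS b n" using isOP_GS isOP_unique by blast
  have m1: "(-1::real) ^ n * (-1) ^ n = 1" by (simp flip: power_mult_distrib)
  then have "poly (GS b n) (- x) = (-1) ^ n * poly q x" by (simp add: pq mult.assoc[symmetric])
  also have "\<dots> = (-1) ^ n * poly (GS b n) x" using \<open>q = GS b n\<close> by simp
  finally show ?thesis .
qed
definition gk :: "nat \<Rightarrow> real \<Rightarrow> real" where "gk k x = exp (- x\<^sup>2) * (x ^ k + (- x) ^ k)"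
definition Cm :: "nat \<Rightarrow> real" where "Cm k = (LINT x|lborel. indicator {0..} x * gk k x)"

lemma gk_meas[measurable]: "gk k \<in> borel_measurable borel"
  unfolding gk_def by measurable

lemma gk_cont: "continuous_on S (gk k)"
  unfolding gk_def by (intro continuous_intros)

lemma neg_pow: "(- x) ^ k = (-1::real) ^ k * x ^ k" by (rule power_minus)

lemma int_gm_neg: "integrable lborel (\<lambda>x::real. exp (- x\<^sup>2) * (- x) ^ k)"
  using lborel_integrable_real_affine[OF int_gm[of k], of "-1" 0] by simp

lemma int_gk: "integrable lborel (gk k)"
proof -
  have "integrable lborel (\<lambda>x::real. exp (- x\<^sup>2) * x ^ k + exp (- x\<^sup>2) * (- x) ^ k)"
    by (intro Bochner_Integration.integrable_add int_gm int_gm_neg)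
  moreover have "gk k = (\<lambda>x::real. exp (- x\<^sup>2) * x ^ k + exp (- x\<^sup>2) * (- x) ^ k)"
    by (auto simp: gk_def fun_eq_iff algebra_simps)
  ultimately show ?thesis by simp
qed

lemma int_ind_gk: "integrable lborel (\<lambda>x. indicator S x * gk k x)" if "S \<in> sets borel"
  using integrable_mult_indicator[of S lborel "gk k"] int_gk that by simp

lemma int_ind_gm: "integrable lborel (\<lambda>x::real. indicator S x * (exp (- x\<^sup>2) * x ^ k))" if "S \<in> sets borel"
  using integrable_mult_indicator[of S lborel "\<lambda>x. exp (- x\<^sup>2) * x ^ k"] int_gm that by simp

lemma mom_half: assumes b: "b > 0" shows "mom b k = (LINT x|lborel. indicator {b..} x * gk k x)"
proof -
  have pt: "x ^ k * wt b x = indicator {b..} x * (exp (- x\<^sup>2) * x ^ k) + indicator {..-b} x * (exp (- x\<^sup>2) * x ^ k)" for x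
    unfolding wt_def using b by (auto split: split_indicator)
  have "mom b k = (LINT x|lborel. indicator {b..} x * (exp (- x\<^sup>2) * x ^ k)) + (LINT x|lborel. indicator {..-b} x * (exp (- x\<^sup>2) * x ^ k))"
    unfolding mom_def pt by (rule Bochner_Integration.integral_add) (auto intro!: int_ind_gm)
  also have "(LINT x|lborel. indicator {..-b} x * (exp (- x\<^sup>2) * x ^ k)) = (LINT x|lborel. indicator {..-b} (-x) * (exp (- (-x)\<^sup>2) * (-x) ^ k))"
    by (rule lint_reflect[where f = "\<lambda>x. indicator {..-b} x * (exp (- x\<^sup>2) * x ^ k)", symmetric])
  also have "\<dots> = (LINT x|lborel. indicator {b..} x * (exp (- x\<^sup>2) * (-x) ^ k))"
    by (intro Bochner_Integration.integral_cong refl) (auto split: split_indicator)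
  also have "(LINT x|lborel. indicator {b..} x * (exp (- x\<^sup>2) * x ^ k)) + \<dots> = (LINT x|lborel. indicator {b..} x * (exp (- x\<^sup>2) * x ^ k) + indicator {b..} x * (exp (- x\<^sup>2) * (-x) ^ k))"
  proof (rule Bochner_Integration.integral_add[symmetric])
    show "integrable lborel (\<lambda>x. indicator {b..} x * (exp (- x\<^sup>2) * (-x) ^ k))"
      using integrable_mult_indicator[of "{b..}" lborel "\<lambda>x. exp (- x\<^sup>2) * (- x) ^ k"] int_gm_neg by simp
  qed (auto intro!: int_ind_gm)
  also have "\<dots> = (LINT x|lborel. indicator {b..} x * gk k x)"
    by (intro Bochner_Integration.integral_cong refl) (simp add: gk_def algebra_simps)
  finally show ?thesis .
qed

lemma lint_Icc_gk: "(LINT x|lborel. indicator {0..b} x * gk k x) = integral {0..b} (gk k)"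
proof -
  have "set_integrable lborel {0..b} (gk k)" by (rule borel_integrable_atLeastAtMost') (rule gk_cont)
  from set_borel_integral_eq_integral(2)[OF this] show ?thesis
    by (simp add: set_lebesgue_integral_def)
qed

lemma mom_J: assumes b: "b > 0" shows "mom b k = Cm k - integral {0..b} (gk k)"
proof -
  have ae: "AE x in lborel. indicator {0..} x * gk k x = indicator {0..b} x * gk k x + indicator {b..} x * gk k x"
    using AE_lborel_singleton[of b] by eventually_elim (use b in \<open>auto split: split_indicator\<close>)
  have "Cm k = (LINT x|lborel. indicator {0..b} x * gk k x + indicator {b..} x * gk k x)"
    unfolding Cm_def by (rule integral_cong_AE) (use ae in auto)
  also have "\<dots> = (LINT x|lborel. indicator {0..b} x * gk k x) + (LINT x|lborel. indicator {b..} x * gk k x)"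
    by (rule Bochner_Integration.integral_add) (auto intro!: int_ind_gk)
  finally show ?thesis using mom_half[OF b, of k] lint_Icc_gk[of b k] by simp
qed

lemma mom_deriv: assumes a: "a > 0" shows "((\<lambda>b. mom b k) has_real_derivative - gk k a) (at a)"
proof -
  have d1: "((\<lambda>b. integral {0..b} (gk k)) has_real_derivative gk k a) (at a within {0..a+1})"
    by (rule integral_has_real_derivative) (use a in \<open>auto intro: gk_cont\<close>)
  have "a \<in> interior {0..a+1}" using a by simp
  then have d2: "((\<lambda>b. integral {0..b} (gk k)) has_real_derivative gk k a) (at a)"
    using d1 at_within_interior by metis
  have d3: "((\<lambda>b. Cm k - integral {0..b} (gk k)) has_real_derivative - gk k a) (at a)"
    using DERIV_diff[OF DERIV_const d2] by simp
  have ev: "\<forall>\<^sub>F b in nhds a. mom b k = Cm k - integral {0..b} (gk k)"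
    using eventually_nhds_in_open[of "{0<..}" a] a by (auto elim!: eventually_mono intro: mom_J)
  show ?thesis using d3 DERIV_cong_ev[OF refl ev refl] by simp
qed

lemma E_aux0: "(c::real) > 0 \<Longrightarrow> B > 0 \<Longrightarrow> F > 0 \<Longrightarrow> s / 2 * (2 * c * t * A / (4 * B * (c * F))) = s / 2 * (A / (B * F)) * t / 2"
  by (simp add: field_simps)

lemma E_aux: "fact (2*j) > (0::real) \<Longrightarrow> sqrt pi / 2 * (2 * (real j + 1) * (2 * real j + 1) * fact (2 * j) / (4 * 2 ^ (2 * j) * ((real j + 1) * fact j))) = (sqrt pi / 2) * (fact (2 * j) / (2 ^ (2 * j) * fact j)) * (2 * real j + 1) / 2"
  by (rule E_aux0) auto

lemma Cm_rec: "real (Suc k) * Cm k = 2 * Cm (k+2)"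
proof (cases "even k")
  case False
  then have "gk k = (\<lambda>_. 0)" "gk (k+2) = (\<lambda>_. 0)" by (auto simp: gk_def fun_eq_iff power_minus_odd)
  then show ?thesis by (simp add: Cm_def)
next
  case True
  then obtain j where k: "k = 2*j" by (auto elim: evenE)
  define E where "E j = (sqrt pi / 2) * (fact (2 * j) / (2 ^ (2 * j) * fact j))" for j :: nat
  have CE: "Cm (2*j) = 2 * E j" for j
  proof -
    have "Cm (2*j) = (LINT x|lborel. 2 * (indicator {0..} x *\<^sub>R (exp (-x\<^sup>2)*x^(2 * j))))"
      unfolding Cm_def gk_def by (intro Bochner_Integration.integral_cong refl) (simp add: power_minus_even power_mult)
    also have "\<dots> = 2 * E j" unfolding E_def
      using has_bochner_integral_integral_eq[OF gaussian_moment_even_pos[of j]] by simp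
    finally show ?thesis .
  qed
  have f2: "(fact (2 * Suc j) :: real) = (2 * real j + 2) * (2 * real j + 1) * fact (2 * j)"
    by (simp add: algebra_simps)
  have f1: "(fact (Suc j) :: real) = (real j + 1) * fact j" by (simp add: algebra_simps)
  have p2: "(2::real) ^ (2 * Suc j) = 4 * 2 ^ (2 * j)" by (simp add: power_mult)
  have "E (Suc j) = sqrt pi / 2 * (2 * (real j + 1) * (2 * real j + 1) * fact (2 * j) / (4 * 2 ^ (2 * j) * ((real j + 1) * fact j)))"
  proof -
    have eq2: "2 * real j + 2 = 2 * (real j + 1)" by simp
    show ?thesis by (simp only: E_def f2 f1 p2 eq2)
  qed
  also have "\<dots> = E j * (2 * real j + 1) / 2"
    unfolding E_def by (rule E_aux) simp
  finally have "E (Suc j) = E j * (2 * real j + 1) / 2" .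
  then show ?thesis using CE[of j] CE[of "Suc j"] k by (simp add: algebra_simps)
qed

lemma dF_gk: "((\<lambda>x::real. exp (- x\<^sup>2) * (x ^ Suc k - (- x) ^ Suc k)) has_real_derivative (real (Suc k) * gk k x - 2 * gk (k+2) x)) (at x)"
proof -
  have d_exp: "((\<lambda>x::real. exp (- x\<^sup>2)) has_real_derivative exp (- x\<^sup>2) * (- 2 * x)) (at x)"
    by (auto intro!: derivative_eq_intros)
  have d_p: "((\<lambda>x::real. x ^ Suc k) has_real_derivative real (Suc k) * x ^ k) (at x)"
    using DERIV_pow[of "Suc k" x] by simp
  have eqf: "(\<lambda>x::real. exp (- x\<^sup>2) * (x ^ Suc k - (- x) ^ Suc k)) = (\<lambda>x. exp (- x\<^sup>2) * ((1 - (-1) ^ Suc k) * x ^ Suc k))"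
  proof
    fix x :: real
    have "(-x)^Suc k = (-1)^Suc k * x^Suc k" by (rule power_minus)
    then show "exp (- x\<^sup>2) * (x ^ Suc k - (- x) ^ Suc k) = exp (- x\<^sup>2) * ((1 - (-1) ^ Suc k) * x ^ Suc k)"
      by (simp only:) (simp add: algebra_simps)
  qed
  have D: "((\<lambda>x::real. exp (- x\<^sup>2) * ((1 - (-1) ^ Suc k) * x ^ Suc k)) has_real_derivative
     exp (- x\<^sup>2) * (- 2 * x) * ((1 - (-1) ^ Suc k) * x ^ Suc k) + ((1 - (-1) ^ Suc k) * (real (Suc k) * x ^ k)) * exp (- x\<^sup>2)) (at x)"
    by (rule DERIV_mult[OF d_exp DERIV_cmult[OF d_p]])
  have "exp (- x\<^sup>2) * (- 2 * x) * ((1 - (-1) ^ Suc k) * x ^ Suc k) + ((1 - (-1) ^ Suc k) * (real (Suc k) * x ^ k)) * exp (- x\<^sup>2)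
     = real (Suc k) * gk k x - 2 * gk (k+2) x"
    unfolding gk_def power_minus[of x k] power_minus[of x "k+2"]
    by (simp add: algebra_simps power2_eq_square)
  then show ?thesis using D unfolding eqf by simp
qed

lemma J_rec: assumes b: "b \<ge> 0"
  shows "real (Suc k) * integral {0..b} (gk k) - 2 * integral {0..b} (gk (k+2)) = exp (- b\<^sup>2) * (b ^ Suc k - (- b) ^ Suc k)"
proof -
  define F where "F x = exp (- x\<^sup>2) * (x ^ Suc k - (- x) ^ Suc k)" for x :: real
  have dF: "(F has_real_derivative (real (Suc k) * gk k x - 2 * gk (k+2) x)) (at x)" for x
    unfolding F_def by (rule dF_gk)
  have h1: "((\<lambda>x. real (Suc k) * gk k x - 2 * gk (k+2) x) has_integral (F b - F 0)) {0..b}"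
  proof (rule fundamental_theorem_of_calculus[OF b])
    fix x assume "x \<in> {0..b}"
    show "(F has_vector_derivative real (Suc k) * gk k x - 2 * gk (k+2) x) (at x within {0..b})"
      using has_field_derivative_at_within[OF dF[of x]] unfolding has_real_derivative_iff_has_vector_derivative .
  qed
  have h2: "((\<lambda>x. real (Suc k) * gk k x - 2 * gk (k+2) x) has_integral
      (real (Suc k) * integral {0..b} (gk k) - 2 * integral {0..b} (gk (k+2)))) {0..b}"
    using has_integral_diff[OF has_integral_mult_left[OF integrable_integral[OF integrable_continuous_real[OF gk_cont[of _ k]]], of "real (Suc k)"]
                               has_integral_mult_left[OF integrable_integral[OF integrable_continuous_real[OF gk_cont[of _ "k+2"]]], of 2]]
    by (simp add: ac_simps)
  have "F b - F 0 = real (Suc k) * integral {0..b} (gk k) - 2 * integral {0..b} (gk (k+2))"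
    by (rule has_integral_unique[OF h1 h2])
  moreover have "F 0 = 0" unfolding F_def by simp
  ultimately show ?thesis unfolding F_def by simp
qed

lemma mom_rec: assumes b: "b > 0"
  shows "real (Suc k) * mom b k = 2 * mom b (k+2) + exp (- b\<^sup>2) * ((- b) ^ Suc k - b ^ Suc k)"
proof -
  define J where "J k = integral {0..b} (gk k)" for k
  have e: "exp (- b\<^sup>2) * ((- b) ^ Suc k - b ^ Suc k) = - (exp (- b\<^sup>2) * (b ^ Suc k - (- b) ^ Suc k))"
    by (simp add: algebra_simps)
  have m1: "real (Suc k) * mom b k = real (Suc k) * Cm k - real (Suc k) * J k"
    using mom_J[OF b, of k] by (simp add: J_def right_diff_distrib)
  have m2: "2 * mom b (k+2) = 2 * Cm (k+2) - 2 * J (k+2)"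
    using mom_J[OF b, of "k+2"] by (simp add: J_def right_diff_distrib)
  show ?thesis using m1 m2 e Cm_rec[of k] J_rec[of b k] b unfolding J_def by linarith
qed

lemma mom_odd: "odd k \<Longrightarrow> mom b k = 0"
  unfolding mom_def by (rule lint_odd) (simp add: wt_even power_minus_odd)
lemma ip_coeffs: assumes "degree p \<le> N" "degree q \<le> N"
  shows "ip b p q = (\<Sum>j\<le>N. \<Sum>i\<le>N. coeff q j * coeff p i * mom b (i+j))"
  using ip_expand2[OF assms(2), of b p] ip_monom[OF assms(1), of b]
  by (simp add: sum_distrib_left mult.assoc)

lemma mom_diffble: "a > 0 \<Longrightarrow> (\<lambda>b. mom b k) differentiable (at a)"
  using mom_deriv[of a k] by (auto intro: differentiableI has_field_derivative_imp_has_derivative)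

lemma ip_diffble:
  assumes a: "a > 0" and dp: "\<And>b. degree (p b) \<le> N" and dq: "\<And>b. degree (q b) \<le> N"
    and cp: "\<And>i. (\<lambda>b. coeff (p b) i) differentiable (at a)"
    and cq: "\<And>i. (\<lambda>b. coeff (q b) i) differentiable (at a)"
  shows "(\<lambda>b. ip b (p b) (q b)) differentiable (at a)"
proof -
  have "(\<lambda>b. \<Sum>j\<le>N. \<Sum>i\<le>N. coeff (q b) j * coeff (p b) i * mom b (i+j)) differentiable (at a)"
    by (intro differentiable_sum ballI finite_atMost differentiable_mult cp cq mom_diffble a)
  moreover have "(\<lambda>b. ip b (p b) (q b)) = (\<lambda>b. \<Sum>j\<le>N. \<Sum>i\<le>N. coeff (q b) j * coeff (p b) i * mom b (i+j))"
    by (rule ext) (rule ip_coeffs[OF dp dq])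
  ultimately show ?thesis by simp
qed

lemma GS_coeff_eq: "coeff (GS b n) i = coeff (monom 1 n) i -
   (\<Sum>j<n. ip b (monom 1 n) (GS b j) / ip b (GS b j) (GS b j) * coeff (GS b j) i)"
  by (subst GS.simps) (simp add: coeff_sum)

lemma GS_coeff_diffble: assumes a: "a > 0" shows "(\<lambda>b. coeff (GS b n) i) differentiable (at a)"
  using assms
proof (induction n arbitrary: i rule: less_induct)
  case (less n)
  have ipd: "(\<lambda>b. ip b (p b) (GS b j)) differentiable (at a)"
    if "j < n" "\<And>b. degree (p b) \<le> n" "\<And>i. (\<lambda>b. coeff (p b) i) differentiable (at a)" for j p
    by (rule ip_diffble[OF a, where N=n]) (use that less.IH a in auto)
  have "(\<lambda>b. coeff (monom 1 n) i - (\<Sum>j<n. ip b (monom 1 n) (GS b j) / ip b (GS b j) (GS b j) * coeff (GS b j) i)) differentiable (at a)"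
  proof (intro differentiable_diff differentiable_const differentiable_sum ballI finite_lessThan differentiable_mult differentiable_divide)
    fix j assume j: "j \<in> {..<n}"
    show "(\<lambda>b. ip b (monom 1 n) (GS b j)) differentiable (at a)"
      by (rule ipd) (use j in \<open>auto simp: degree_monom_le\<close>)
    show "(\<lambda>b. ip b (GS b j) (GS b j)) differentiable (at a)"
      by (rule ipd) (use j less.IH a in auto)
    show "(\<lambda>b. coeff (GS b j) i) differentiable (at a)" using j less.IH a by auto
    show "ip a (GS a j) (GS a j) \<noteq> 0" using GS_h_pos[of a j] by simp
  qed
  moreover have "(\<lambda>b. coeff (GS b n) i) = (\<lambda>b. coeff (monom 1 n) i - (\<Sum>j<n. ip b (monom 1 n) (GS b j) / ip b (GS b j) (GS b j) * coeff (GS b j) i))"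
    by (rule ext) (rule GS_coeff_eq)
  ultimately show ?case by simp
qed
lemma poly_sum_le: fixes p :: "real poly" assumes "degree p \<le> N" shows "poly p x = (\<Sum>i\<le>N. coeff p i * x ^ i)"
proof -
  have "poly p x = poly (\<Sum>i\<le>N. monom (coeff p i) i) x" using poly_as_sum_of_monoms'[OF assms] by simp
  also have "\<dots> = (\<Sum>i\<le>N. coeff p i * x ^ i)" by (simp add: poly_sum poly_monom)
  finally show ?thesis .
qed

lemma pco_deriv_GS: assumes a: "a > 0" and n: "n \<ge> 2"
  shows "((\<lambda>b. coeff (GS b n) (n-2)) has_real_derivative
     2 * exp (- a\<^sup>2) * poly (GS a n) a * poly (GS a (n-2)) a / ip a (GS a (n-2)) (GS a (n-2))) (at a)"
proof -
  define c where "c i b = coeff (GS b n) i" for i b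
  define c' where "c' i = deriv (c i) a" for i
  define P where "P = GS a n"
  define e where "e = exp (- a\<^sup>2)"
  have D: "(c i has_real_derivative c' i) (at a)" for i
    unfolding c'_def c_def using GS_coeff_diffble[OF a] DERIV_deriv_iff_real_differentiable by blast
  have cn: "c' n = 0"
  proof -
    have "c n = (\<lambda>_. 1)" unfolding c_def by auto
    with D[of n] have "((\<lambda>_. 1) has_real_derivative c' n) (at a)" by simp
    then show ?thesis by (rule DERIV_unique[OF _ DERIV_const])
  qed
  define Q where "Q = (\<Sum>i\<le>n. monom (c' i) i)"
  have cQ: "coeff Q i = (if i \<le> n then c' i else 0)" for i
    unfolding Q_def by (simp add: coeff_sum coeff_monom)
  have dQ: "degree Q \<le> n - 1"
  proof (rule degree_le, intro allI impI)
    fix i assume "n - 1 < i"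
    then have "i = n \<or> i > n" using n by auto
    then show "coeff Q i = 0" using cn by (auto simp: cQ)
  qed
  \<comment> \<open>derivative of the orthogonality relations\<close>
  have key: "ip a Q (monom 1 k) = e * (poly P a * a ^ k + poly P (-a) * (-a) ^ k)" if k: "k < n" for k
  proof -
    have F0: "ip b (GS b n) (monom 1 k) = (\<Sum>i\<le>n. c i b * mom b (i+k))" for b
      unfolding c_def by (rule ip_monom) simp
    have Fz: "ip b (GS b n) (monom 1 k) = 0" for b
      by (rule GS_ortho_low) (use k in \<open>simp add: degree_monom_eq\<close>)
    have DF: "((\<lambda>b. \<Sum>i\<le>n. c i b * mom b (i+k)) has_real_derivative
         (\<Sum>i\<le>n. c i a * (- gk (i+k) a) + c' i * mom a (i+k))) (at a)"
      by (intro DERIV_sum DERIV_mult' D mom_deriv a)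
    have "(\<lambda>b. \<Sum>i\<le>n. c i b * mom b (i+k)) = (\<lambda>_. 0)" using F0 Fz by auto
    with DF have DF0: "((\<lambda>_. 0) has_real_derivative (\<Sum>i\<le>n. c i a * (- gk (i+k) a) + c' i * mom a (i+k))) (at a)"
      by simp
    have "(\<Sum>i\<le>n. c i a * (- gk (i+k) a) + c' i * mom a (i+k)) = 0"
      by (rule DERIV_unique[OF DF0 DERIV_const])
    then have "(\<Sum>i\<le>n. c' i * mom a (i+k)) = (\<Sum>i\<le>n. c i a * gk (i+k) a)"
      by (simp add: sum.distrib sum_negf sum_subtractf)
    also have "\<dots> = e * ((\<Sum>i\<le>n. c i a * a ^ i) * a ^ k + (\<Sum>i\<le>n. c i a * (-a) ^ i) * (-a) ^ k)"
      unfolding gk_def e_def by (simp add: sum_distrib_left sum_distrib_right power_add algebra_simps sum.distrib)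
    also have "\<dots> = e * (poly P a * a ^ k + poly P (-a) * (-a) ^ k)"
      unfolding P_def c_def by (simp add: poly_sum_le[of "GS a n" n])
    finally have "(\<Sum>i\<le>n. c' i * mom a (i+k)) = e * (poly P a * a ^ k + poly P (-a) * (-a) ^ k)" .
    moreover have "ip a Q (monom 1 k) = (\<Sum>i\<le>n. c' i * mom a (i+k))"
      using ip_monom[of Q n a k] dQ by (simp add: cQ)
    ultimately show ?thesis by simp
  qed
  have keyj: "ip a Q (GS a j) = e * (poly P a * poly (GS a j) a + poly P (-a) * poly (GS a j) (-a))" if j: "j < n" for j
  proof -
    have "ip a Q (GS a j) = (\<Sum>k\<le>j. coeff (GS a j) k * ip a Q (monom 1 k))"
      by (rule ip_expand2) simp
    also have "\<dots> = (\<Sum>k\<le>j. coeff (GS a j) k * (e * (poly P a * a ^ k + poly P (-a) * (-a) ^ k)))"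
      using key j by (intro sum.cong refl) auto
    also have "\<dots> = e * (poly P a * (\<Sum>k\<le>j. coeff (GS a j) k * a ^ k) + poly P (-a) * (\<Sum>k\<le>j. coeff (GS a j) k * (-a) ^ k))"
      by (simp add: sum_distrib_left algebra_simps sum.distrib)
    also have "\<dots> = e * (poly P a * poly (GS a j) a + poly P (-a) * poly (GS a j) (-a))"
      by (simp add: poly_sum_le[of "GS a j" j])
    finally show ?thesis .
  qed
  have parP: "poly P (-a) = (-1) ^ n * poly P a" unfolding P_def by (rule GS_parity)
  have s1: "(-1::real)^n * (-1)^(n-1) = -1"
  proof -
    have "(-1::real)^n * (-1)^(n-1) = (-1)^(n + (n-1))" by (simp add: power_add)
    also have "n + (n-1) = Suc (2*(n-1))" using n by simp
    finally show ?thesis by (simp add: power_mult)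
  qed
  have s2: "(-1::real)^n * (-1)^(n-2) = 1"
  proof -
    have "(-1::real)^n * (-1)^(n-2) = (-1)^(n + (n-2))" by (simp add: power_add)
    also have "n + (n-2) = 2*(n-1)" using n by simp
    finally show ?thesis by (simp add: power_mult)
  qed
  have "ip a Q (GS a (n-1)) = e * poly P a * poly (GS a (n-1)) a * (1 + (-1)^n * (-1)^(n-1))"
    using n keyj[of "n-1"] parP GS_parity[of a "n-1" a] by (simp add: algebra_simps)
  then have "ip a Q (GS a (n-1)) = 0" using s1 by simp
  then have "coeff Q (n-1) * ip a (GS a (n-1)) (GS a (n-1)) = 0" using GS_L[OF dQ] by simp
  then have cQ1: "coeff Q (n-1) = 0" using GS_h_pos[of a "n-1"] by simp
  have dQ2: "degree Q \<le> n - 2"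
  proof (rule degree_le, intro allI impI)
    fix i assume "n - 2 < i"
    then have "i = n - 1 \<or> i > n - 1" by auto
    then show "coeff Q i = 0" using cQ1 dQ by (auto intro: coeff_eq_0)
  qed
  have "ip a Q (GS a (n-2)) = e * poly P a * poly (GS a (n-2)) a * (1 + (-1)^n * (-1)^(n-2))"
    using n keyj[of "n-2"] parP GS_parity[of a "n-2" a] by (simp add: algebra_simps)
  then have "ip a Q (GS a (n-2)) = 2 * e * poly P a * poly (GS a (n-2)) a" using s2 by simp
  then have "coeff Q (n-2) * ip a (GS a (n-2)) (GS a (n-2)) = 2 * e * poly P a * poly (GS a (n-2)) a"
    using GS_L[OF dQ2] by simp
  then have "c' (n-2) = 2 * e * poly P a * poly (GS a (n-2)) a / ip a (GS a (n-2)) (GS a (n-2))"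
    using GS_h_pos[of a "n-2"] cQ[of "n-2"] by (simp add: field_simps)
  then show ?thesis using D[of "n-2"] unfolding c_def P_def e_def by simp
qed
lemma ip_monom1: "ip b (monom c m) 1 = c * mom b m"
proof -
  have "ip b (monom c m) 1 = (LINT x|lborel. c * (x ^ m * wt b x))"
    unfolding ip_def by (simp add: poly_monom mult.assoc)
  then show ?thesis unfolding mom_def by simp
qed

lemma ip_mult1: "ip b (p * q) 1 = ip b p q"
  unfolding ip_def by simp

lemma ip_shift: "ip b (pCons 0 p) q = ip b p (pCons 0 q)"
  unfolding ip_def by (simp add: ac_simps)

lemma ibp_monom: assumes b: "b > 0"
  shows "ip b (pderiv (monom 1 k)) 1 - 2 * ip b (pCons 0 (monom 1 k)) 1 - exp (- b\<^sup>2) * (poly (monom 1 k) (-b) - poly (monom 1 k) b) = 0"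
proof (cases k)
  case 0
  have "pCons 0 (1::real poly) = monom 1 1" by (simp add: monom_Suc)
  then show ?thesis using 0 mom_odd[of 1 b] by (simp add: pderiv_monom ip_monom1 poly_monom)
next
  case (Suc m)
  then show ?thesis using mom_rec[OF b, of m]
    by (simp add: pderiv_monom monom_Suc[symmetric] ip_monom1 poly_monom algebra_simps)
qed

lemma ibp: assumes b: "b > 0"
  shows "ip b (pderiv p) 1 = 2 * ip b (pCons 0 p) 1 + exp (- b\<^sup>2) * (poly p (-b) - poly p b)"
proof -
  define T where "T p = ip b (pderiv p) 1 - 2 * ip b (pCons 0 p) 1 - exp (- b\<^sup>2) * (poly p (-b) - poly p b)" for p
  have T0: "T 0 = 0" unfolding T_def by simp
  have Tadd: "T (x + y) = T x + T y" for x y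
  proof -
    have eq: "pCons 0 (x + y) = pCons 0 x + pCons 0 y" by simp
    have "ip b (pCons 0 (x + y)) 1 = ip b (pCons 0 x) 1 + ip b (pCons 0 y) 1"
      by (subst eq) (rule ip_add1)
    then show ?thesis unfolding T_def by (simp add: pderiv_add ip_add1 algebra_simps)
  qed
  have Tsm: "T (smult c x) = c * T x" for c x
  proof -
    have eq: "pCons 0 (smult c x) = smult c (pCons 0 x)" by simp
    have "ip b (pCons 0 (smult c x)) 1 = c * ip b (pCons 0 x) 1"
      by (subst eq) (rule ip_smult1)
    then show ?thesis unfolding T_def by (simp add: pderiv_smult ip_smult1 algebra_simps)
  qed
  have "T p = T (\<Sum>i\<le>degree p. smult (coeff p i) (monom 1 i))"
    by (rule arg_cong[where f=T]) (simp add: smult_monom poly_as_sum_of_monoms)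
  also have "\<dots> = (\<Sum>i\<le>degree p. T (smult (coeff p i) (monom 1 i)))"
    using sum_comp_morphism[of T "\<lambda>i. smult (coeff p i) (monom 1 i)" "{..degree p}", OF T0 Tadd] by (simp add: comp_def)
  also have "\<dots> = 0"
  proof -
    have Tm: "T (monom 1 i) = 0" for i unfolding T_def by (rule ibp_monom[OF b])
    show ?thesis by (simp add: Tsm Tm)
  qed
  finally show ?thesis unfolding T_def by simp
qed

lemma ip_GS_shift_self: "ip b (GS b m) (pCons 0 (GS b m)) = 0"
proof -
  have "ip b (GS b m) (pCons 0 (GS b m)) = (LINT x|lborel. x * (poly (GS b m) x * poly (GS b m) x * wt b x))"
    unfolding ip_def by (simp add: ac_simps)
  also have "\<dots> = 0"
  proof (rule lint_odd)
    fix x :: real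
    have "(-1::real) ^ m * (-1) ^ m = 1" by (simp flip: power_mult_distrib)
    then show "- x * (poly (GS b m) (- x) * poly (GS b m) (- x) * wt b (- x)) = - (x * (poly (GS b m) x * poly (GS b m) x * wt b x))"
      by (simp add: GS_parity wt_even algebra_simps)
  qed
  finally show ?thesis .
qed

lemma GS_shift_L: "ip b (pCons 0 (GS b (m))) (GS b (Suc m)) = ip b (GS b (Suc m)) (GS b (Suc m))"
proof -
  have "degree (pCons 0 (GS b m)) \<le> Suc m" by (simp add: GS_ne0)
  from GS_L[OF this] show ?thesis by simp
qed

lemma Z_lemma: "degree R \<le> m \<Longrightarrow> (\<forall>j\<le>m. ip b R (GS b j) = 0) \<Longrightarrow> R = 0"
proof (induction m arbitrary: R)
  case 0
  then have "coeff R 0 * ip b (GS b 0) (GS b 0) = 0" using GS_L[of R 0 b] by simp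
  then have "coeff R 0 = 0" using GS_h_pos[of b 0] by simp
  then show ?case using 0 by (metis leading_coeff_0_iff le_zero_eq)
next
  case (Suc m)
  then have "coeff R (Suc m) * ip b (GS b (Suc m)) (GS b (Suc m)) = 0" using GS_L[of R "Suc m" b] by simp
  then have c: "coeff R (Suc m) = 0" using GS_h_pos[of b "Suc m"] by simp
  have "degree R \<le> m"
  proof (rule degree_le, intro allI impI)
    fix i assume "m < i" then have "i = Suc m \<or> i > Suc m" by auto
    then show "coeff R i = 0" using c Suc.prems by (auto intro: coeff_eq_0)
  qed
  then show ?case using Suc by auto
qed

lemma three_term: assumes n: "n \<ge> 2"
  shows "poly (GS a (n-2)) a * ip a (GS a (n-1)) (GS a (n-1)) = (a * poly (GS a (n-1)) a - poly (GS a n) a) * ip a (GS a (n-2)) (GS a (n-2))"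
proof -
  define h where "h m = ip a (GS a m) (GS a m)" for m
  define \<beta> where "\<beta> = h (n-1) / h (n-2)"
  define R where "R = pCons 0 (GS a (n-1)) - GS a n - smult \<beta> (GS a (n-2))"
  have hpos: "h m > 0" for m unfolding h_def by (rule GS_h_pos)
  have n1: "Suc (n-1) = n" "Suc (n-2) = n-1" using n by auto
  have dR: "degree R \<le> n"
    unfolding R_def using n
    by (intro degree_diff_le) (auto simp: GS_ne0 intro: order.trans[OF degree_smult_le])
  have "\<forall>j\<le>n. ip a R (GS a j) = 0"
  proof (intro allI impI)
    fix j assume j: "j \<le> n"
    have e1: "ip a R (GS a j) = ip a (GS a (n-1)) (pCons 0 (GS a j)) - ip a (GS a n) (GS a j) - \<beta> * ip a (GS a (n-2)) (GS a j)"
      unfolding R_def by (simp add: ip_diff1 ip_smult1 ip_shift)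
    consider "j < n-2" | "j = n-2" | "j = n-1" | "j = n" using j n by linarith
    then show "ip a R (GS a j) = 0"
    proof cases
      case 1
      have "ip a (GS a (n-1)) (pCons 0 (GS a j)) = 0"
        by (rule GS_ortho_low) (use 1 n in \<open>simp add: GS_ne0\<close>)
      moreover have "ip a (GS a n) (GS a j) = 0" by (rule GS_ortho) (use 1 in auto)
      moreover have "ip a (GS a (n-2)) (GS a j) = 0" by (rule GS_ortho) (use 1 in auto)
      ultimately show ?thesis using e1 by simp
    next
      case 2
      have "ip a (GS a (n-1)) (pCons 0 (GS a j)) = h (n-1)"
        using GS_shift_L[of a "n-2"] n1 2 unfolding h_def by (simp add: ip_sym)
      moreover have "ip a (GS a n) (GS a j) = 0" by (rule GS_ortho) (use 2 n in auto)
      moreover have "\<beta> * ip a (GS a (n-2)) (GS a j) = h (n-1)"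
        using 2 hpos[of "n-2"] unfolding \<beta>_def h_def by simp
      ultimately show ?thesis using e1 by simp
    next
      case 3
      have "ip a (GS a (n-1)) (pCons 0 (GS a j)) = 0" using 3 ip_GS_shift_self by simp
      moreover have "ip a (GS a n) (GS a j) = 0" by (rule GS_ortho) (use 3 n in auto)
      moreover have "ip a (GS a (n-2)) (GS a j) = 0"
        using GS_ortho[of "n-2" "n-1" a] 3 n by (simp add: ip_sym)
      ultimately show ?thesis using e1 by simp
    next
      case 4
      have "ip a (GS a (n-1)) (pCons 0 (GS a j)) = h n"
        using GS_shift_L[of a "n-1"] n1 4 unfolding h_def by (simp add: ip_sym ip_shift)
      moreover have "ip a (GS a n) (GS a j) = h n" using 4 unfolding h_def by simp
      moreover have "ip a (GS a (n-2)) (GS a j) = 0"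
        using GS_ortho[of "n-2" n a] 4 n by (simp add: ip_sym)
      ultimately show ?thesis using e1 by simp
    qed
  qed
  then have "R = 0" using Z_lemma[OF dR] by blast
  then have "poly R a = 0" by simp
  then have "a * poly (GS a (n-1)) a - poly (GS a n) a = \<beta> * poly (GS a (n-2)) a"
    unfolding R_def by simp
  then show ?thesis using hpos[of "n-2"] unfolding \<beta>_def h_def by (simp add: field_simps)
qed

lemma h_rec: assumes a: "a > 0" and n: "n \<ge> 2"
  shows "2 * ip a (GS a n) (GS a n) = real n * ip a (GS a (n-1)) (GS a (n-1)) + 2 * exp (- a\<^sup>2) * poly (GS a n) a * poly (GS a (n-1)) a"
proof -
  define P where "P = GS a n"
  define Q where "Q = GS a (n-1)"
  have n1: "Suc (n-1) = n" using n by auto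
  have I: "ip a (pderiv (P * Q)) 1 = 2 * ip a (pCons 0 (P * Q)) 1 + exp (- a\<^sup>2) * (poly (P * Q) (-a) - poly (P * Q) a)"
    by (rule ibp[OF a])
  have t1: "ip a (P * pderiv Q) 1 = 0"
    unfolding ip_mult1 P_def Q_def by (rule GS_ortho_low) (use n in \<open>simp add: degree_pderiv\<close>)
  have t2: "ip a (Q * pderiv P) 1 = real n * ip a Q Q"
  proof -
    have "ip a (Q * pderiv P) 1 = ip a (pderiv P) Q" unfolding ip_mult1 by (rule ip_sym)
    also have "\<dots> = coeff (pderiv P) (n-1) * ip a Q Q"
      unfolding Q_def by (rule GS_L) (simp add: P_def degree_pderiv)
    also have "coeff (pderiv P) (n-1) = real n"
    proof -
      have n2: "Suc (n - Suc 0) = n" using n by auto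
      show ?thesis unfolding P_def using n by (simp add: coeff_pderiv n2 of_nat_diff)
    qed
    finally show ?thesis .
  qed
  have t3: "ip a (pCons 0 (P * Q)) 1 = ip a P P"
  proof -
    have eq: "pCons 0 (P * Q) = P * pCons 0 Q" by (simp add: mult_pCons_right[symmetric])
    have "ip a (pCons 0 (P * Q)) 1 = ip a P (pCons 0 Q)" by (subst eq) (rule ip_mult1)
    also have "\<dots> = ip a (pCons 0 Q) P" by (rule ip_sym)
    also have "\<dots> = ip a P P" unfolding P_def Q_def using GS_shift_L[of a "n-1"] n1 by simp
    finally show ?thesis .
  qed
  have s1: "(-1::real)^n * (-1)^(n-1) = -1"
  proof -
    have "(-1::real)^n * (-1)^(n-1) = (-1)^(n + (n-1))" by (simp add: power_add)
    also have "n + (n-1) = Suc (2*(n-1))" using n by simp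
    finally show ?thesis by (simp add: power_mult)
  qed
  have t4: "poly (P * Q) (-a) - poly (P * Q) a = - 2 * (poly P a * poly Q a)"
  proof -
    have "poly (P * Q) (-a) = ((-1)^n * (-1)^(n-1)) * (poly P a * poly Q a)"
      unfolding P_def Q_def by (simp add: GS_parity algebra_simps)
    then show ?thesis using s1 by simp
  qed
  have "ip a (pderiv (P * Q)) 1 = ip a (P * pderiv Q) 1 + ip a (Q * pderiv P) 1"
    by (simp only: pderiv_mult ip_add1)
  then have "ip a (pderiv (P * Q)) 1 = real n * ip a Q Q" using t1 t2 by simp
  with I[unfolded t3 t4] have "real n * ip a Q Q = 2 * ip a P P + exp (- a\<^sup>2) * (- 2 * (poly P a * poly Q a))" by simp
  then show ?thesis unfolding P_def Q_def by (simp add: algebra_simps)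
qed
theorem mainTheorem7:
  fixes n :: nat and a :: real
  assumes "n \<ge> 2" and "a > 0"
  shows "((\<lambda>b. pco n b) has_real_derivative
            (2 * exp (- (a^2)) * poly (OP a n) a * poly (OP a (n - 2)) a / hn a (n - 2))) (at a)
       \<and> 2 * exp (- (a^2)) * poly (OP a n) a * poly (OP a (n - 2)) a / hn a (n - 2)
           = a * rn n a - (real n + rn n a) / 2 * Rn n a"
proof
  note n = assms(1) and a = assms(2)
  have hn: "hn a m = ip a (GS a m) (GS a m)" for m
    unfolding hn_def ip_def OP_GS by (simp add: power2_eq_square)
  have pco: "(\<lambda>b. pco n b) = (\<lambda>b. coeff (GS b n) (n-2))" unfolding pco_def OP_GS by simp
  show "((\<lambda>b. pco n b) has_real_derivative
            (2 * exp (- (a^2)) * poly (OP a n) a * poly (OP a (n - 2)) a / hn a (n - 2))) (at a)"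
    unfolding pco hn OP_GS by (rule pco_deriv_GS[OF a n])
  define e where "e = exp (- (a^2))"
  define P0 where "P0 = poly (GS a n) a"
  define P1 where "P1 = poly (GS a (n-1)) a"
  define P2 where "P2 = poly (GS a (n-2)) a"
  define h0 where "h0 = ip a (GS a n) (GS a n)"
  define h1 where "h1 = ip a (GS a (n-1)) (GS a (n-1))"
  define h2 where "h2 = ip a (GS a (n-2)) (GS a (n-2))"
  have h0p: "h0 > 0" and h1p: "h1 > 0" and h2p: "h2 > 0" unfolding h0_def h1_def h2_def by (rule GS_h_pos)+
  have tt: "P2 * h1 = (a * P1 - P0) * h2" unfolding P0_def P1_def P2_def h1_def h2_def by (rule three_term[OF n])
  have hr: "2 * h0 = real n * h1 + 2 * e * P0 * P1" unfolding P0_def P1_def h0_def h1_def e_def by (rule h_rec[OF a n])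
  have L: "2 * e * P0 * P2 / h2 = 2 * e * P0 * (a * P1 - P0) / h1"
  proof -
    have "P2 = (a * P1 - P0) * h2 / h1" using tt h1p by (simp add: field_simps)
    then show ?thesis using h2p by simp
  qed
  have M: "(real n + 2 * e * P0 * P1 / h1) / 2 = h0 / h1"
  proof -
    have "(real n + 2 * e * P0 * P1 / h1) / 2 = (real n * h1 + 2 * e * P0 * P1) / (2 * h1)"
      using h1p by (simp add: field_simps)
    also have "\<dots> = (2 * h0) / (2 * h1)" by (simp only: hr)
    also have "\<dots> = h0 / h1" by simp
    finally show ?thesis .
  qed
  have "a * (2 * e * P0 * P1 / h1) - (real n + 2 * e * P0 * P1 / h1) / 2 * (2 * e * P0 ^ 2 / h0)
      = a * (2 * e * P0 * P1 / h1) - h0 / h1 * (2 * e * P0 ^ 2 / h0)" by (simp only: M)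
  also have "\<dots> = 2 * e * P0 * (a * P1 - P0) / h1" using h0p h1p by (simp add: field_simps power2_eq_square)
  finally have R: "a * (2 * e * P0 * P1 / h1) - (real n + 2 * e * P0 * P1 / h1) / 2 * (2 * e * P0 ^ 2 / h0) = 2 * e * P0 * P2 / h2"
    using L by simp
  show "2 * exp (- (a^2)) * poly (OP a n) a * poly (OP a (n - 2)) a / hn a (n - 2)
           = a * rn n a - (real n + rn n a) / 2 * Rn n a"
    unfolding rn_def Rn_def hn OP_GS using R
    unfolding e_def P0_def P1_def P2_def h0_def h1_def h2_def by simp
qed

end
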